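(* Let $A$ be an AUF algebra and let $e\in A$ be a generating idempotent. Then the map $A\to\mathrm{End}^0_{-,eAe}(Ae)$ sending each $a\in A$ to the operator of left multiplication by $a$ on $Ae$ is a linear isomorphism.
   Context: All algebras are associative $\mathbb C$-algebras, not necessarily unital. An idempotent is $e$ with $e^2=e$. An algebra $A$ is AUF if there is a family $(e_i)_{i\in\mathfrak I}$ of mutually orthogonal idempotents with $\dim e_iAe_j<\infty$ and $A=\sum_{i,j}e_iAe_j$. A left $A$-module $M$ is quasicoherent if $\xi\in A\xi$ for all $\xi\in M$. Irreducible means nonzero with no nonzero proper submodules. An idempotent $e$ is generating if every irreducible quasicoherent left $A$-module is a quotient of $Ae$. For a quasicoherent left $A$-module $M$: $M^\vee$ is the space of linear functionals $\varphi$ on $M$ for which there is an idempotent $f\in A$ with $\varphi(f\eta)=\varphi(\eta)$ for all $\eta$; $\mathrm{End}^0(M)$ is the span in $\mathrm{End}(M)$ of the operators $\eta\mapsto\varphi(\eta)\xi$ with $\xi\in M$, $\varphi\in M^\vee$; if $M$ carries a right action of an algebra $C$ commuting with $A$, $\mathrm{End}^0_{-,C}(M)=\{T\in\mathrm{End}^0(M):T(\xi c)=T(\xi)c\ \forall\xi,c\}$. Here $Ae$ carries the right action of $eAe$ by multiplication. *)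

theory Defs
  imports Complex_Main
begin

text \<open>A (not necessarily unital) associative complex algebra: the carrier is the whole
  type 'a (class ring = non-unital ring), with a complex scalar multiplication sc.\<close>

definition calg :: "(complex \<Rightarrow> 'a::ring \<Rightarrow> 'a) \<Rightarrow> bool" where
  "calg sc \<longleftrightarrow> vector_space sc \<and>
     (\<forall>c x y. sc c (x * y) = sc c x * y \<and> sc c (x * y) = x * sc c y)"

definition AUF :: "(complex \<Rightarrow> 'a::ring \<Rightarrow> 'a) \<Rightarrow> bool" where
  "AUF sc \<longleftrightarrow> (\<exists>E::'a set.
     (\<forall>i\<in>E. i * i = i) \<and>
     (\<forall>i\<in>E. \<forall>j\<in>E. i \<noteq> j \<longrightarrow> i * j = 0) \<and>
     (\<forall>i\<in>E. \<forall>j\<in>E. \<exists>B. finite B \<and> {i * a * j | a. True} \<subseteq> module.span sc B) \<and>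
     (\<forall>x. \<exists>F g. finite F \<and> F \<subseteq> E \<times> E \<and>
        (\<forall>p\<in>F. g p \<in> {fst p * a * snd p | a. True}) \<and> x = (\<Sum>p\<in>F. g p)))"

record ('a, 'm) lmodule =
  mcar :: "'m set"
  madd :: "'m \<Rightarrow> 'm \<Rightarrow> 'm"
  mzero :: 'm
  msc :: "complex \<Rightarrow> 'm \<Rightarrow> 'm"
  mact :: "'a \<Rightarrow> 'm \<Rightarrow> 'm"

definition lmod :: "(complex \<Rightarrow> 'a::ring \<Rightarrow> 'a) \<Rightarrow> ('a, 'm) lmodule \<Rightarrow> bool" where
  "lmod sc M \<longleftrightarrow>
     mzero M \<in> mcar M \<and>
     (\<forall>x\<in>mcar M. \<forall>y\<in>mcar M. madd M x y \<in> mcar M) \<and>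
     (\<forall>c. \<forall>x\<in>mcar M. msc M c x \<in> mcar M) \<and>
     (\<forall>a. \<forall>x\<in>mcar M. mact M a x \<in> mcar M) \<and>
     (\<forall>x\<in>mcar M. \<forall>y\<in>mcar M. \<forall>w\<in>mcar M. madd M (madd M x y) w = madd M x (madd M y w)) \<and>
     (\<forall>x\<in>mcar M. \<forall>y\<in>mcar M. madd M x y = madd M y x) \<and>
     (\<forall>x\<in>mcar M. madd M (mzero M) x = x) \<and>
     (\<forall>x\<in>mcar M. madd M x (msc M (-1) x) = mzero M) \<and>
     (\<forall>c. \<forall>x\<in>mcar M. \<forall>y\<in>mcar M. msc M c (madd M x y) = madd M (msc M c x) (msc M c y)) \<and>
     (\<forall>c d. \<forall>x\<in>mcar M. msc M (c + d) x = madd M (msc M c x) (msc M d x)) \<and>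
     (\<forall>c d. \<forall>x\<in>mcar M. msc M (c * d) x = msc M c (msc M d x)) \<and>
     (\<forall>x\<in>mcar M. msc M 1 x = x) \<and>
     (\<forall>a b. \<forall>x\<in>mcar M. mact M (a + b) x = madd M (mact M a x) (mact M b x)) \<and>
     (\<forall>a. \<forall>x\<in>mcar M. \<forall>y\<in>mcar M. mact M a (madd M x y) = madd M (mact M a x) (mact M a y)) \<and>
     (\<forall>a b. \<forall>x\<in>mcar M. mact M (a * b) x = mact M a (mact M b x)) \<and>
     (\<forall>c a. \<forall>x\<in>mcar M. mact M (sc c a) x = msc M c (mact M a x)) \<and>
     (\<forall>c a. \<forall>x\<in>mcar M. mact M a (msc M c x) = msc M c (mact M a x))"

definition quasicoherent :: "('a, 'm) lmodule \<Rightarrow> bool" where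
  "quasicoherent M \<longleftrightarrow> (\<forall>\<xi>\<in>mcar M. \<exists>a. \<xi> = mact M a \<xi>)"

definition submodule :: "'m set \<Rightarrow> ('a, 'm) lmodule \<Rightarrow> bool" where
  "submodule N M \<longleftrightarrow> N \<subseteq> mcar M \<and> mzero M \<in> N \<and>
     (\<forall>x\<in>N. \<forall>y\<in>N. madd M x y \<in> N) \<and> (\<forall>c. \<forall>x\<in>N. msc M c x \<in> N) \<and>
     (\<forall>a. \<forall>x\<in>N. mact M a x \<in> N)"

definition irreducible_mod :: "('a, 'm) lmodule \<Rightarrow> bool" where
  "irreducible_mod M \<longleftrightarrow> mcar M \<noteq> {mzero M} \<and>
     (\<forall>N. submodule N M \<longrightarrow> N = {mzero M} \<or> N = mcar M)"

definition modhom :: "('a, 'm) lmodule \<Rightarrow> ('a, 'n) lmodule \<Rightarrow> ('m \<Rightarrow> 'n) \<Rightarrow> bool" where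
  "modhom M N f \<longleftrightarrow> (\<forall>x\<in>mcar M. f x \<in> mcar N) \<and>
     (\<forall>x\<in>mcar M. \<forall>y\<in>mcar M. f (madd M x y) = madd N (f x) (f y)) \<and>
     (\<forall>c. \<forall>x\<in>mcar M. f (msc M c x) = msc N c (f x)) \<and>
     (\<forall>a. \<forall>x\<in>mcar M. f (mact M a x) = mact N a (f x))"

definition Ae_mod :: "(complex \<Rightarrow> 'a::ring \<Rightarrow> 'a) \<Rightarrow> 'a \<Rightarrow> ('a, 'a) lmodule" where
  "Ae_mod sc e = \<lparr>mcar = {a * e | a. True}, madd = (+), mzero = 0, msc = sc, mact = (*)\<rparr>"

text \<open>Generating idempotent. Irreducible quasicoherent modules are cyclic, hence
  isomorphic to quotients A/L; it suffices to quantify over modules whose elements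
  are subsets of A.\<close>

definition generating :: "(complex \<Rightarrow> 'a::ring \<Rightarrow> 'a) \<Rightarrow> 'a \<Rightarrow> bool" where
  "generating sc e \<longleftrightarrow> e * e = e \<and>
     (\<forall>M :: ('a, 'a set) lmodule. lmod sc M \<and> quasicoherent M \<and> irreducible_mod M \<longrightarrow>
        (\<exists>f. modhom (Ae_mod sc e) M f \<and> f ` mcar (Ae_mod sc e) = mcar M))"

definition mdual :: "('a::ring, 'm) lmodule \<Rightarrow> ('m \<Rightarrow> complex) set" where
  "mdual M = {\<phi>. (\<forall>x\<in>mcar M. \<forall>y\<in>mcar M. \<phi> (madd M x y) = \<phi> x + \<phi> y) \<and>
                 (\<forall>c. \<forall>x\<in>mcar M. \<phi> (msc M c x) = c * \<phi> x) \<and>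
                 (\<exists>f. f * f = f \<and> (\<forall>\<eta>\<in>mcar M. \<phi> (mact M f \<eta>) = \<phi> \<eta>))}"

primrec msum :: "('a, 'm) lmodule \<Rightarrow> (nat \<Rightarrow> 'm) \<Rightarrow> nat \<Rightarrow> 'm" where
  "msum M g 0 = mzero M"
| "msum M g (Suc n) = madd M (msum M g n) (g n)"

text \<open>End^0(M): the span of the rank one operators; operators are represented as
  functions on 'm which vanish (= mzero) off the carrier.\<close>

definition End0 :: "('a::ring, 'm) lmodule \<Rightarrow> ('m \<Rightarrow> 'm) set" where
  "End0 M = {T. (\<forall>\<eta>. \<eta> \<notin> mcar M \<longrightarrow> T \<eta> = mzero M) \<and>
     (\<exists>n (c::nat \<Rightarrow> complex) \<phi> \<xi>. (\<forall>k<n. \<phi> k \<in> mdual M \<and> \<xi> k \<in> mcar M) \<and>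
        (\<forall>\<eta>\<in>mcar M. T \<eta> = msum M (\<lambda>k. msc M (c k * \<phi> k \<eta>) (\<xi> k)) n))}"

definition End0_right :: "('a::ring, 'm) lmodule \<Rightarrow> ('m \<Rightarrow> 'b \<Rightarrow> 'm) \<Rightarrow> 'b set \<Rightarrow> ('m \<Rightarrow> 'm) set" where
  "End0_right M ract C = {T \<in> End0 M. \<forall>\<xi>\<in>mcar M. \<forall>c\<in>C. T (ract \<xi> c) = ract (T \<xi>) c}"

definition Lmul :: "(complex \<Rightarrow> 'a::ring \<Rightarrow> 'a) \<Rightarrow> 'a \<Rightarrow> 'a \<Rightarrow> 'a \<Rightarrow> 'a" where
  "Lmul sc e a = (\<lambda>\<eta>. if \<eta> \<in> mcar (Ae_mod sc e) then a * \<eta> else 0)"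

end

theory Submission
  imports Defs
begin

inductive_set Jset :: "'a::ring \<Rightarrow> 'a set" for e where
  J0: "0 \<in> Jset e" | J1: "u*e*v \<in> Jset e" | J2: "x \<in> Jset e \<Longrightarrow> y \<in> Jset e \<Longrightarrow> x+y \<in> Jset e"

lemma J_multl: "x \<in> Jset e \<Longrightarrow> a*x \<in> Jset e"
proof (induction rule: Jset.induct)
  case J0 then show ?case by (simp add: Jset.J0)
next
  case (J1 u v) then show ?case using Jset.J1[of "a*u" e v] by (simp add: mult.assoc)
next
  case (J2 x y) then show ?case by (simp add: distrib_left Jset.J2)
qed

lemma J_sum: "finite S \<Longrightarrow> (\<And>s. s\<in>S \<Longrightarrow> f s \<in> Jset e) \<Longrightarrow> sum f S \<in> Jset e"
  by (induction S rule: finite_induct) (auto intro: Jset.intros)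

lemma J_ann: assumes "\<And>y. x*(y*e) = 0" shows "j \<in> Jset e \<Longrightarrow> x*j = 0"
proof (induction rule: Jset.induct)
  case (J1 u v)
  have "x*(u*e*v) = (x*(u*e))*v" by (simp add: mult.assoc)
  then show ?case using assms[of u] by simp
qed (auto simp: distrib_left)

definition subm :: "(complex \<Rightarrow> 'a \<Rightarrow> 'a) \<Rightarrow> 'a::ring \<Rightarrow> 'a set \<Rightarrow> bool" where
 "subm sc l N \<longleftrightarrow> N \<subseteq> {a*l|a. True} \<and> 0 \<in> N \<and> (\<forall>x\<in>N. \<forall>y\<in>N. x+y\<in>N) \<and> (\<forall>c. \<forall>x\<in>N. sc c x \<in> N) \<and> (\<forall>a. \<forall>x\<in>N. a*x\<in>N)"

definition Al :: "'a::ring \<Rightarrow> 'a set" where "Al l = {a*l|a. True}"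

definition cs :: "'a set \<Rightarrow> 'a::ring \<Rightarrow> 'a set" where "cs N x = (+) x ` N"

definition Qmod :: "(complex \<Rightarrow> 'a \<Rightarrow> 'a) \<Rightarrow> 'a::ring \<Rightarrow> 'a set \<Rightarrow> ('a, 'a set) lmodule" where
 "Qmod sc l N = \<lparr>mcar = {(+) x ` N | x. x \<in> {a*l|a. True}}, madd = \<lambda>X Y. {x+y|x y. x\<in>X \<and> y\<in>Y}, mzero = N,
    msc = \<lambda>c X. {sc c x + n|x n. x\<in>X \<and> n\<in>N}, mact = \<lambda>a X. {a*x+n|x n. x\<in>X \<and> n\<in>N}\<rparr>"

locale ctx = vector_space sc for sc :: "complex \<Rightarrow> 'a::ring \<Rightarrow> 'a" +
  fixes E :: "'a set"
  assumes scl: "\<And>c x y. sc c (x*y) = sc c x * y" and scr: "\<And>c x y. sc c (x*y) = x * sc c y"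
  and idem: "\<And>i. i\<in>E \<Longrightarrow> i*i = i"
  and orth: "\<And>i j. i\<in>E \<Longrightarrow> j\<in>E \<Longrightarrow> i\<noteq>j \<Longrightarrow> i*j = 0"
  and fin: "\<And>i j. i\<in>E \<Longrightarrow> j\<in>E \<Longrightarrow> \<exists>B. finite B \<and> {i*a*j|a. True} \<subseteq> span B"
  and dec: "\<And>x. \<exists>F g. finite F \<and> F \<subseteq> E\<times>E \<and> (\<forall>p\<in>F. g p \<in> {fst p * a * snd p|a. True}) \<and> x = (\<Sum>p\<in>F. g p)"
begin

lemma unit_r: assumes "j \<in> T" "finite T" "T \<subseteq> E" shows "(y*j) * sum id T = y*j"
proof -
  have "(y*j) * sum id T = (\<Sum>t\<in>T. y*(j*t))" by (simp add: sum_distrib_left mult.assoc)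
  also have "\<dots> = y*(j*j) + (\<Sum>t\<in>T-{j}. y*(j*t))" using assms by (simp add: sum.remove)
  also have "(\<Sum>t\<in>T-{j}. y*(j*t)) = 0"
  proof (intro sum.neutral ballI)
    fix t assume "t\<in>T-{j}" then have "j*t=0" using assms orth by auto
    thus "y*(j*t)=0" by simp
  qed
  finally show ?thesis using assms idem by auto
qed

lemma unit_l: assumes "i \<in> T" "finite T" "T \<subseteq> E" shows "sum id T * (i*y) = i*y"
proof -
  have "sum id T * (i*y) = (\<Sum>t\<in>T. (t*i)*y)" by (simp add: sum_distrib_right mult.assoc)
  also have "\<dots> = (i*i)*y + (\<Sum>t\<in>T-{i}. (t*i)*y)" using assms by (simp add: sum.remove)
  also have "(\<Sum>t\<in>T-{i}. (t*i)*y) = 0"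
  proof (intro sum.neutral ballI)
    fix t assume "t\<in>T-{i}" then have "t*i=0" using assms orth by auto
    thus "(t*i)*y=0" by simp
  qed
  finally show ?thesis using assms idem by auto
qed

lemma right_unit: "\<exists>S. finite S \<and> S \<subseteq> E \<and> (\<forall>T. finite T \<longrightarrow> S \<subseteq> T \<longrightarrow> T \<subseteq> E \<longrightarrow> x * sum id T = x)"
proof -
  obtain F g where F: "finite F" "F \<subseteq> E\<times>E" "\<forall>p\<in>F. g p \<in> {fst p * a * snd p|a. True}" "x = (\<Sum>p\<in>F. g p)"
    using dec[of x] by blast
  show ?thesis
  proof (intro exI conjI allI impI)
    show "finite (snd ` F)" using F(1) by simp
    show "snd ` F \<subseteq> E" using F(2) by auto
    fix T assume T: "finite T" "snd ` F \<subseteq> T" "T \<subseteq> E"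
    have "x * sum id T = (\<Sum>p\<in>F. g p * sum id T)" using F(4) by (simp add: sum_distrib_right)
    also have "\<dots> = (\<Sum>p\<in>F. g p)"
    proof (rule sum.cong[OF refl])
      fix p assume p: "p \<in> F"
      from F(3) p obtain a where "g p = fst p * a * snd p" by blast
      moreover have "snd p \<in> T" using p T by auto
      ultimately show "g p * sum id T = g p" using unit_r[OF _ T(1) T(3), of "snd p" "fst p * a"] by simp
    qed
    finally show "x * sum id T = x" using F(4) by simp
  qed
qed

lemma left_unit: "\<exists>S. finite S \<and> S \<subseteq> E \<and> sum id S * x = x"
proof -
  obtain F g where F: "finite F" "F \<subseteq> E\<times>E" "\<forall>p\<in>F. g p \<in> {fst p * a * snd p|a. True}" "x = (\<Sum>p\<in>F. g p)"
    using dec[of x] by blast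
  show ?thesis
  proof (intro exI conjI allI impI)
    show "finite (fst ` F)" using F(1) by simp
    show "fst ` F \<subseteq> E" using F(2) by auto
    have "sum id (fst ` F) * x = (\<Sum>p\<in>F. sum id (fst ` F) * g p)" using F(4) by (simp add: sum_distrib_left)
    also have "\<dots> = (\<Sum>p\<in>F. g p)"
    proof (rule sum.cong[OF refl])
      fix p assume p: "p \<in> F"
      from F(3) p obtain a where "g p = fst p * a * snd p" by blast
      then have "g p = fst p * (a * snd p)" by (simp add: mult.assoc)
      moreover have "fst p \<in> fst ` F" using p by auto
      moreover have "finite (fst ` F)" "fst ` F \<subseteq> E" using F(1,2) by auto
      ultimately show "sum id (fst ` F) * g p = g p" using unit_l[of "fst p" "fst ` F" "a * snd p"] by simp
    qed
    finally show "sum id (fst ` F) * x = x" using F(4) by simp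
  qed
qed

lemma J_sc: "x \<in> Jset e \<Longrightarrow> sc c x \<in> Jset e"
proof (induction rule: Jset.induct)
  case J0 then show ?case by (simp add: Jset.J0)
next
  case (J1 u v) then show ?case using Jset.J1[of "sc c u" e v] by (simp add: scl)
next
  case (J2 x y) then show ?case by (simp add: scale_right_distrib Jset.J2)
qed

lemma sc_neg: "sc (-1) x = - x" by simp

lemma Al_add: assumes "(x::'a) \<in> {a*l|a. True}" "y \<in> {a*l|a. True}" shows "x + y \<in> {a*l|a. True}"
proof -
  obtain a b where "x=a*l" "y=b*l" using assms by auto
  then have "x+y=(a+b)*l" by (simp add: distrib_right)
  thus ?thesis by auto
qed
lemma Al_sc: assumes "(x::'a) \<in> {a*l|a. True}" shows "sc c x \<in> {a*l|a. True}"
proof -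
  obtain a where "x=a*l" using assms by auto
  then have "sc c x=(sc c a)*l" by (simp add: scl)
  thus ?thesis by auto
qed
lemma Al_mul: assumes "(x::'a) \<in> {a*l|a. True}" shows "b * x \<in> {a*l|a. True}"
proof -
  obtain a where "x=a*l" using assms by auto
  then have "b*x=(b*a)*l" by (simp add: mult.assoc)
  thus ?thesis by auto
qed

lemma Al0: "0 \<in> Al (l::'a)"
proof -
  have "(0::'a) = 0 * l" by simp
  then show ?thesis unfolding Al_def by blast
qed
lemma Al_add': "(x::'a) \<in> Al l \<Longrightarrow> y \<in> Al l \<Longrightarrow> x + y \<in> Al l" using Al_add unfolding Al_def by blast
lemma Al_sc': "(x::'a) \<in> Al l \<Longrightarrow> sc c x \<in> Al l" using Al_sc unfolding Al_def by blast
lemma Al_mul': "(x::'a) \<in> Al l \<Longrightarrow> b * x \<in> Al l" using Al_mul unfolding Al_def by blast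

context fixes l N assumes sN: "subm sc l N"
begin

lemma N0: "0 \<in> N" and Nadd: "x\<in>N \<Longrightarrow> y\<in>N \<Longrightarrow> x+y\<in>N" and Nsc: "x\<in>N \<Longrightarrow> sc c x \<in> N"
  and Nmul: "x\<in>N \<Longrightarrow> a*x\<in>N" and NAl: "x \<in> N \<Longrightarrow> x \<in> {a*l|a. True}"
  using sN unfolding subm_def by auto

lemma Nneg: "x\<in>N \<Longrightarrow> -x\<in>N" using Nsc[of x "-1"] by simp
lemma Ndiff: "x\<in>N \<Longrightarrow> y\<in>N \<Longrightarrow> x-y\<in>N" using Nadd[OF _ Nneg[of y]] by simp

lemma cos_self: "x \<in> (+) x ` N"
proof -
  have "x = x + 0" by simp
  then show ?thesis using N0 by (rule image_eqI)
qed

lemma cos_eq: "((+) x ` N = (+) y ` N) \<longleftrightarrow> x - y \<in> N"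
proof
  assume "(+) x ` N = (+) y ` N"
  then have "x \<in> (+) y ` N" using cos_self[of x] by simp
  then show "x - y \<in> N" by (auto simp: algebra_simps)
next
  assume m: "x - y \<in> N"
  show "(+) x ` N = (+) y ` N"
  proof (intro set_eqI iffI)
    fix z assume "z \<in> (+) x ` N"
    then obtain n where "n \<in> N" "z = x + n" by auto
    then show "z \<in> (+) y ` N" using Nadd[OF m, of n] by (auto intro!: image_eqI[of _ _ "(x-y)+n"] simp: algebra_simps)
  next
    fix z assume "z \<in> (+) y ` N"
    then obtain n where "n \<in> N" "z = y + n" by auto
    then show "z \<in> (+) x ` N" using Ndiff[OF _ m, of n] by (auto intro!: image_eqI[of _ _ "n - (x-y)"] simp: algebra_simps)
  qed
qed

lemma cos0: "(+) 0 ` N = N" by simp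
lemma cos_mem: "k \<in> N \<Longrightarrow> x + k \<in> (+) x ` N" by auto

lemma Q_add: "madd (Qmod sc l N) ((+) x ` N) ((+) y ` N) = (+) (x+y) ` N"
proof (intro set_eqI iffI)
  fix z assume "z \<in> madd (Qmod sc l N) ((+) x ` N) ((+) y ` N)"
  then obtain n m where "n\<in>N" "m\<in>N" "z = (x+n)+(y+m)" by (auto simp: Qmod_def)
  then show "z \<in> (+) (x+y) ` N" using Nadd by (auto intro!: image_eqI[of _ _ "n+m"] simp: algebra_simps)
next
  fix z assume "z \<in> (+) (x+y) ` N"
  then obtain k where "k \<in> N" "z = (x+y)+k" by auto
  then have 1: "z = (x+k)+y" by (simp add: algebra_simps)
  have 2: "x+k \<in> (+) x ` N" using cos_mem \<open>k \<in> N\<close> .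
  have 3: "y \<in> (+) y ` N" by (rule cos_self)
  show "z \<in> madd (Qmod sc l N) ((+) x ` N) ((+) y ` N)" unfolding Qmod_def lmodule.select_convs using 1 2 3 by blast
qed

lemma Q_sc: "msc (Qmod sc l N) c ((+) x ` N) = (+) (sc c x) ` N"
proof (intro set_eqI iffI)
  fix z assume "z \<in> msc (Qmod sc l N) c ((+) x ` N)"
  then obtain n m where "n\<in>N" "m\<in>N" "z = sc c (x+n) + m" by (auto simp: Qmod_def)
  then show "z \<in> (+) (sc c x) ` N" using Nadd Nsc
    by (auto intro!: image_eqI[of _ _ "sc c n+m"] simp: algebra_simps scale_right_distrib)
next
  fix z assume "z \<in> (+) (sc c x) ` N"
  then obtain k where "k \<in> N" "z = sc c x+k" by auto
  then show "z \<in> msc (Qmod sc l N) c ((+) x ` N)" using cos_self[of x] by (simp add: Qmod_def) blast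
qed

lemma Q_act: "mact (Qmod sc l N) a ((+) x ` N) = (+) (a*x) ` N"
proof (intro set_eqI iffI)
  fix z assume "z \<in> mact (Qmod sc l N) a ((+) x ` N)"
  then obtain n m where "n\<in>N" "m\<in>N" "z = a*(x+n) + m" by (auto simp: Qmod_def)
  then show "z \<in> (+) (a*x) ` N" using Nadd Nmul
    by (auto intro!: image_eqI[of _ _ "a*n+m"] simp: algebra_simps)
next
  fix z assume "z \<in> (+) (a*x) ` N"
  then obtain k where "k \<in> N" "z = a*x+k" by auto
  then show "z \<in> mact (Qmod sc l N) a ((+) x ` N)" using cos_self[of x] by (simp add: Qmod_def) blast
qed

lemma Q_car: "mcar (Qmod sc l N) = cs N ` Al l" by (auto simp: Qmod_def cs_def Al_def)
lemma Q_zero: "mzero (Qmod sc l N) = cs N 0" by (simp add: Qmod_def cs_def)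
lemma Q_ball: "(\<forall>X\<in>mcar (Qmod sc l N). P X) \<longleftrightarrow> (\<forall>x\<in>Al l. P (cs N x))"
  unfolding Q_car by blast
lemma Q_memI: "x \<in> Al l \<Longrightarrow> cs N x \<in> mcar (Qmod sc l N)"
  unfolding Q_car by blast
lemma Q_add': "madd (Qmod sc l N) (cs N x) (cs N y) = cs N (x+y)" using Q_add by (simp add: cs_def)
lemma Q_sc': "msc (Qmod sc l N) c (cs N x) = cs N (sc c x)" using Q_sc by (simp add: cs_def)
lemma Q_act': "mact (Qmod sc l N) a (cs N x) = cs N (a*x)" using Q_act by (simp add: cs_def)
lemma Q_lmod: "lmod sc (Qmod sc l N)"
  apply (simp only: lmod_def Q_ball Q_zero)
  apply (intro conjI ballI allI)
  apply (simp_all add: Q_add' Q_sc' Q_act' Q_memI Al_add' Al_sc' Al_mul' Al0)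
  apply (simp_all add: ac_simps scale_right_distrib scale_left_distrib
    distrib_left distrib_right scl[symmetric] scr[symmetric])
  done

lemma cs_eq: "cs N x = cs N y \<longleftrightarrow> x - y \<in> N" using cos_eq by (simp add: cs_def)

end

lemma Ae_car: "mcar (Ae_mod sc e) = {a*e|a. True}" by (simp add: Ae_mod_def)
lemma Ae_ops: "madd (Ae_mod sc e) = (+)" "mzero (Ae_mod sc e) = 0" "msc (Ae_mod sc e) = sc" "mact (Ae_mod sc e) = (*)"
  by (simp_all add: Ae_mod_def)

lemma key: assumes gen: "generating sc e" and lE: "l \<in> E" shows "l \<in> Jset e"
proof (rule ccontr)
  assume nl: "l \<notin> Jset e"
  have ee: "e * e = e" using gen by (simp add: generating_def)
  have "l = l * l" using idem[OF lE] by simp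
  then have lAl: "l \<in> Al l" unfolding Al_def by blast
  define N0 where "N0 = Jset e \<inter> Al l"
  define P where "P = {N. subm sc l N \<and> N0 \<subseteq> N \<and> l \<notin> N}"
  have N0P: "N0 \<in> P" unfolding P_def
  proof (intro CollectI conjI)
    show "subm sc l N0" unfolding subm_def N0_def
    proof (intro conjI ballI allI)
      show "Jset e \<inter> Al l \<subseteq> {a*l|a. True}" unfolding Al_def by blast
      show "0 \<in> Jset e \<inter> Al l" using Al0 Jset.J0 by blast
      fix x y assume "x \<in> Jset e \<inter> Al l" "y \<in> Jset e \<inter> Al l"
      then show "x+y \<in> Jset e \<inter> Al l" using Al_add' Jset.J2 by blast
    next
      fix c x assume "x \<in> Jset e \<inter> Al l" then show "sc c x \<in> Jset e \<inter> Al l" using Al_sc' J_sc by blast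
    next
      fix a x assume "x \<in> Jset e \<inter> Al l" then show "a * x \<in> Jset e \<inter> Al l" using Al_mul' J_multl by blast
    qed
    show "N0 \<subseteq> N0" by simp
    show "l \<notin> N0" using nl N0_def by blast
  qed
  have "\<exists>M\<in>P. \<forall>X\<in>P. M \<subseteq> X \<longrightarrow> X = M"
  proof (rule subset_Zorn_nonempty)
    show "P \<noteq> {}" using N0P by auto
    fix C assume C: "C \<noteq> {}" "subset.chain P C"
    then have CP: "C \<subseteq> P" and ch: "\<forall>X\<in>C. \<forall>Y\<in>C. X \<subseteq> Y \<or> Y \<subseteq> X" by (auto simp: subset_chain_def)
    have two: "\<exists>Z\<in>C. x \<in> Z \<and> y \<in> Z" if "x \<in> \<Union>C" "y \<in> \<Union>C" for x y
      using that ch by blast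
    have sub: "subm sc l Z" if "Z \<in> C" for Z using that CP P_def by auto
    show "\<Union>C \<in> P" unfolding P_def
    proof (intro CollectI conjI)
      show "subm sc l (\<Union>C)" unfolding subm_def
      proof (intro conjI ballI allI)
        show "\<Union>C \<subseteq> {a*l|a. True}"
        proof
          fix x assume "x \<in> \<Union>C"
          then obtain Z where "Z\<in>C" "x\<in>Z" by blast
          then show "x \<in> {a*l|a. True}" using sub[OF \<open>Z\<in>C\<close>] unfolding subm_def by blast
        qed
        show "0 \<in> \<Union>C" using C(1) sub by (auto simp: subm_def)
        fix x y assume "x \<in> \<Union>C" "y \<in> \<Union>C"
        then obtain Z where "Z\<in>C" "x\<in>Z" "y\<in>Z" using two by blast
        then show "x+y \<in> \<Union>C" using sub[of Z] by (auto simp: subm_def)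
      next
        fix c x assume "x \<in> \<Union>C"
        then obtain Z where "Z\<in>C" "x\<in>Z" by blast
        then have "sc c x \<in> Z" using sub[OF \<open>Z\<in>C\<close>] unfolding subm_def by blast
        then show "sc c x \<in> \<Union>C" using \<open>Z\<in>C\<close> by blast
      next
        fix a x assume "x \<in> \<Union>C"
        then obtain Z where "Z\<in>C" "x\<in>Z" by blast
        then have "a * x \<in> Z" using sub[OF \<open>Z\<in>C\<close>] unfolding subm_def by blast
        then show "a * x \<in> \<Union>C" using \<open>Z\<in>C\<close> by blast
      qed
      show "N0 \<subseteq> \<Union>C" using C(1) CP P_def by auto
      show "l \<notin> \<Union>C" using CP P_def by auto
    qed
  qed
  then obtain N where NP: "N \<in> P" and Nmax: "\<And>X. X \<in> P \<Longrightarrow> N \<subseteq> X \<Longrightarrow> X = N" by blast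
  have sN: "subm sc l N" and N0N: "N0 \<subseteq> N" and lN: "l \<notin> N" using NP P_def by auto
  let ?Q = "Qmod sc l N"
  have lm: "lmod sc ?Q" by (rule Q_lmod[OF sN])
  have qc: "quasicoherent ?Q" unfolding quasicoherent_def Q_ball[OF sN]
  proof
    fix x assume "x \<in> Al l"
    obtain S where "finite S" "S \<subseteq> E" "sum id S * x = x" using left_unit by blast
    then show "\<exists>a. cs N x = mact ?Q a (cs N x)" using Q_act'[OF sN, of "sum id S" x] by (intro exI[of _ "sum id S"]) simp
  qed
  have irr: "irreducible_mod ?Q" unfolding irreducible_mod_def
  proof (intro conjI allI impI)
    have "cs N l \<in> mcar ?Q" using Q_memI[OF sN lAl] .
    moreover have "cs N l \<noteq> cs N 0" using cs_eq[OF sN] lN by simp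
    ultimately show "mcar ?Q \<noteq> {mzero ?Q}" using Q_zero[OF sN] by auto
  next
    fix S' assume S': "submodule S' ?Q"
    have S'sub: "S' \<subseteq> mcar ?Q" using S' unfolding submodule_def by blast
    have z: "cs N 0 \<in> S'" using S' unfolding submodule_def Q_zero[OF sN] by blast
    have ad: "\<And>X Y. X\<in>S' \<Longrightarrow> Y\<in>S' \<Longrightarrow> madd ?Q X Y \<in> S'" using S' unfolding submodule_def by blast
    have sc': "\<And>c X. X\<in>S' \<Longrightarrow> msc ?Q c X \<in> S'" using S' unfolding submodule_def by blast
    have ac: "\<And>a X. X\<in>S' \<Longrightarrow> mact ?Q a X \<in> S'" using S' unfolding submodule_def by blast
    define N' where "N' = {x \<in> Al l. cs N x \<in> S'}"
    have sN': "subm sc l N'" unfolding subm_def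
    proof (intro conjI ballI allI)
      show "N' \<subseteq> {a*l|a. True}" unfolding N'_def Al_def by auto
      show "0 \<in> N'" using z Al0 N'_def by auto
      fix x y assume "x \<in> N'" "y \<in> N'" then show "x + y \<in> N'"
        using ad[of "cs N x" "cs N y"] Q_add'[OF sN] Al_add' unfolding N'_def by auto
    next
      fix c x assume "x \<in> N'" then show "sc c x \<in> N'"
        using sc'[of "cs N x" c] Q_sc'[OF sN] Al_sc' unfolding N'_def by auto
    next
      fix a x assume "x \<in> N'" then show "a * x \<in> N'"
        using ac[of "cs N x" a] Q_act'[OF sN] Al_mul' unfolding N'_def by auto
    qed
    have NN': "N \<subseteq> N'"
    proof
      fix x assume "x \<in> N"
      then have "x \<in> Al l" "cs N x = cs N 0" using NAl[OF sN] cs_eq[OF sN] by (auto simp: Al_def)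
      then show "x \<in> N'" using z N'_def by auto
    qed
    show "S' = {mzero ?Q} \<or> S' = mcar ?Q"
    proof (cases "l \<in> N'")
      case True
      have "mcar ?Q \<subseteq> S'"
      proof
        fix X assume "X \<in> mcar ?Q"
        then obtain x where "x \<in> Al l" "X = cs N x" using Q_car[OF sN] by auto
        then obtain a where "X = cs N (a*l)" unfolding Al_def by auto
        then have "X = mact ?Q a (cs N l)" using Q_act'[OF sN] by simp
        then show "X \<in> S'" using ac True N'_def by auto
      qed
      then show ?thesis using S'sub by auto
    next
      case False
      have "N' \<in> P" using sN' N0N NN' False P_def by auto
      then have NN: "N' = N" using Nmax NN' by auto
      have "S' \<subseteq> {cs N 0}"
      proof
        fix X assume X: "X \<in> S'"
        then obtain x where "x \<in> Al l" "X = cs N x" using S'sub Q_car[OF sN] by auto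
        then have "x \<in> N" using X NN N'_def by auto
        then show "X \<in> {cs N 0}" using \<open>X = cs N x\<close> cs_eq[OF sN] by auto
      qed
      then show ?thesis using z Q_zero[OF sN] by auto
    qed
  qed
  have gen2: "\<forall>M :: ('a, 'a set) lmodule. lmod sc M \<and> quasicoherent M \<and> irreducible_mod M \<longrightarrow>
        (\<exists>f. modhom (Ae_mod sc e) M f \<and> f ` mcar (Ae_mod sc e) = mcar M)" using gen unfolding generating_def by (rule conjunct2)
  have "\<exists>f. modhom (Ae_mod sc e) ?Q f \<and> f ` mcar (Ae_mod sc e) = mcar ?Q"
    using gen2[rule_format, OF conjI[OF lm conjI[OF qc irr]]] .
  then obtain f where hom: "modhom (Ae_mod sc e) ?Q f" and surj: "f ` mcar (Ae_mod sc e) = mcar ?Q"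
    by blast
  have eAe: "e \<in> mcar (Ae_mod sc e)" using ee by (auto simp: Ae_mod_def intro: exI[of _ e])
  have hom1: "\<forall>a. \<forall>x\<in>mcar (Ae_mod sc e). f (mact (Ae_mod sc e) a x) = mact ?Q a (f x)"
    using hom unfolding modhom_def by blast
  have fmul: "f (a * x) = mact ?Q a (f x)" if "x \<in> mcar (Ae_mod sc e)" for a x
    using hom1 that unfolding Ae_ops by blast
  have "f e \<in> mcar ?Q" using hom eAe unfolding modhom_def by blast
  then obtain y0 where y0: "y0 \<in> Al l" "f e = cs N y0" unfolding Q_car[OF sN] by blast
  have "f e = cs N (e * y0)" using fmul[OF eAe, of e] ee y0 Q_act'[OF sN] by simp
  then have d: "y0 - e * y0 \<in> N" using y0 cs_eq[OF sN] by simp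
  have "e * y0 \<in> Jset e" using Jset.J1[of e e y0] ee by simp
  then have ey: "e * y0 \<in> N" using N0N N0_def Al_mul'[OF y0(1)] by auto
  have "(y0 - e*y0) + e*y0 \<in> N" by (rule Nadd[OF sN d ey])
  then have "y0 \<in> N" by simp
  then have fe0: "f e = cs N 0" using y0 cs_eq[OF sN] by simp
  have "cs N l \<in> f ` mcar (Ae_mod sc e)" using surj Q_memI[OF sN lAl] by simp
  then obtain a where "cs N l = f (a * e)" by (auto simp: Ae_mod_def)
  also have "\<dots> = cs N 0" using fmul[OF eAe, of a] fe0 Q_act'[OF sN] by simp
  finally show False using cs_eq[OF sN] lN by simp
qed


lemma Ae_mul: assumes "(x::'a) \<in> {a*e|a. True}" shows "b * x \<in> {a*e|a. True}"
proof -
  obtain a where "x=a*e" using assms by auto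
  then have "b*x=(b*a)*e" by (simp add: mult.assoc)
  thus ?thesis by auto
qed

lemma msum_Ae: "msum (Ae_mod sc e) g n = (\<Sum>k<n. g k)"
  by (induction n) (simp_all add: Ae_ops)

lemma sumS_J: assumes gen: "generating sc e" "finite S" "S \<subseteq> E" shows "sum id S \<in> Jset e"
  using assms by (intro J_sum) (auto intro: key)

lemma Lmul_inj: assumes gen: "generating sc e" and eq: "Lmul sc e a = Lmul sc e b" shows "a = b"
proof -
  have "(a-b)*(y*e) = 0" for y
  proof -
    have "Lmul sc e a (y*e) = Lmul sc e b (y*e)" using eq by simp
    moreover have "y*e \<in> mcar (Ae_mod sc e)" by (auto simp: Ae_mod_def)
    ultimately have "a*(y*e) = b*(y*e)" unfolding Lmul_def by simp
    then show ?thesis by (simp add: algebra_simps)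
  qed
  then have ann: "j \<in> Jset e \<Longrightarrow> (a-b)*j = 0" for j using J_ann by blast
  obtain S where S: "finite S" "S \<subseteq> E" "(a-b) * sum id S = a-b" using right_unit[of "a-b"] by blast
  then have "a - b = 0" using ann[OF sumS_J[OF gen S(1,2)]] by simp
  then show ?thesis by simp
qed

lemma Lmul_surj: assumes gen: "generating sc e" and T: "T \<in> End0_right (Ae_mod sc e) (*) {e * x * e | x. True}"
  shows "\<exists>a. T = Lmul sc e a"
proof -
  have ee: "e * e = e" using gen by (simp add: generating_def)
  let ?Ae = "{a*e|a. True}"
  have T0': "T \<in> End0 (Ae_mod sc e)" using T unfolding End0_right_def by blast
  have off0: "\<forall>\<eta>. \<eta> \<notin> mcar (Ae_mod sc e) \<longrightarrow> T \<eta> = mzero (Ae_mod sc e)" using T0' unfolding End0_def by blast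
  have off: "\<And>\<eta>. \<eta> \<notin> ?Ae \<Longrightarrow> T \<eta> = 0" using off0 by (simp only: Ae_car Ae_ops) blast
  have "\<exists>n c \<phi> \<xi>. (\<forall>k<n. \<phi> k \<in> mdual (Ae_mod sc e) \<and> \<xi> k \<in> mcar (Ae_mod sc e)) \<and>
        (\<forall>\<eta>\<in>mcar (Ae_mod sc e). T \<eta> = msum (Ae_mod sc e) (\<lambda>k. msc (Ae_mod sc e) (c k * \<phi> k \<eta>) (\<xi> k)) n)"
    using T0' unfolding End0_def by blast
  then obtain n c \<phi> \<xi> where A: "\<forall>k<n. \<phi> k \<in> mdual (Ae_mod sc e) \<and> \<xi> k \<in> mcar (Ae_mod sc e)"
    and B: "\<forall>\<eta>\<in>mcar (Ae_mod sc e). T \<eta> = msum (Ae_mod sc e) (\<lambda>k. msc (Ae_mod sc e) (c k * \<phi> k \<eta>) (\<xi> k)) n"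
    by blast
  have ph: "\<And>k. k<n \<Longrightarrow> \<phi> k \<in> mdual (Ae_mod sc e)" using A by blast
  have xi: "\<And>k. k<n \<Longrightarrow> \<xi> k \<in> ?Ae" using A unfolding Ae_car by blast
  have rep: "T \<eta> = (\<Sum>k<n. sc (c k * \<phi> k \<eta>) (\<xi> k))" if "\<eta> \<in> ?Ae" for \<eta>
  proof -
    have "\<eta> \<in> mcar (Ae_mod sc e)" using that by (simp only: Ae_car)
    then have "T \<eta> = msum (Ae_mod sc e) (\<lambda>k. msc (Ae_mod sc e) (c k * \<phi> k \<eta>) (\<xi> k)) n" using B by blast
    then show ?thesis by (simp only: msum_Ae Ae_ops)
  qed
  have rc0: "\<forall>\<xi>\<in>mcar (Ae_mod sc e). \<forall>c\<in>{e * x * e | x. True}. T (\<xi> * c) = T \<xi> * c"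
    using T unfolding End0_right_def by blast
  have rc: "\<And>x y. x \<in> ?Ae \<Longrightarrow> y \<in> {e * x * e | x. True} \<Longrightarrow> T (x*y) = T x * y"
    using rc0 unfolding Ae_car by blast
  have phadd: "\<phi> k (x+y) = \<phi> k x + \<phi> k y" if "k<n" "x \<in> ?Ae" "y \<in> ?Ae" for k x y
    using ph[OF that(1)] that(2,3) unfolding mdual_def Ae_car Ae_ops by blast
  have Tadd: "T (x+y) = T x + T y" if "x \<in> ?Ae" "y \<in> ?Ae" for x y
  proof -
    have "x + y \<in> ?Ae" using that by (auto simp: distrib_right[symmetric])
    then have "T (x+y) = (\<Sum>k<n. sc (c k * \<phi> k x) (\<xi> k) + sc (c k * \<phi> k y) (\<xi> k))"
      using rep phadd that by (simp add: distrib_left scale_left_distrib)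
    also have "\<dots> = T x + T y" using rep that by (simp add: sum.distrib)
    finally show ?thesis .
  qed
  have zAe: "0 \<in> ?Ae" by (auto intro: exI[of _ 0])
  have T0: "T 0 = 0" using Tadd[OF zAe zAe] by simp
  have "\<forall>k. \<exists>f. k<n \<longrightarrow> (\<forall>\<eta>\<in>?Ae. \<phi> k (f * \<eta>) = \<phi> k \<eta>)"
  proof
    fix k show "\<exists>f. k<n \<longrightarrow> (\<forall>\<eta>\<in>?Ae. \<phi> k (f * \<eta>) = \<phi> k \<eta>)"
    proof (cases "k<n")
      case True then show ?thesis using ph[OF True] unfolding mdual_def Ae_car Ae_ops by blast
    qed simp
  qed
  from choice[OF this] obtain fk where fk0: "\<forall>k. k<n \<longrightarrow> (\<forall>\<eta>\<in>?Ae. \<phi> k (fk k * \<eta>) = \<phi> k \<eta>)" by blast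
  have fk: "\<And>k. k<n \<Longrightarrow> (\<forall>\<eta>\<in>?Ae. \<phi> k (fk k * \<eta>) = \<phi> k \<eta>)" using fk0 by blast
  have "\<forall>k. \<exists>S. finite S \<and> S \<subseteq> E \<and> (\<forall>T. finite T \<longrightarrow> S \<subseteq> T \<longrightarrow> T \<subseteq> E \<longrightarrow> fk k * sum id T = fk k)"
    using right_unit by blast
  from choice[OF this] obtain Sk where Sk0: "\<forall>k. finite (Sk k) \<and> Sk k \<subseteq> E \<and> (\<forall>T. finite T \<longrightarrow> Sk k \<subseteq> T \<longrightarrow> T \<subseteq> E \<longrightarrow> fk k * sum id T = fk k)"
    by blast
  have Sk: "\<And>k. finite (Sk k) \<and> Sk k \<subseteq> E \<and> (\<forall>T. finite T \<longrightarrow> Sk k \<subseteq> T \<longrightarrow> T \<subseteq> E \<longrightarrow> fk k * sum id T = fk k)"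
    using Sk0 by blast
  define S where "S = (\<Union>k<n. Sk k)"
  have S: "finite S" "S \<subseteq> E" using Sk unfolding S_def by auto
  define F where "F = sum id S"
  have fkF: "fk k * F = fk k" if "k<n" for k using Sk[of k] S that unfolding F_def S_def by blast
  have TF: "T (F * \<eta>) = T \<eta>" if "\<eta> \<in> ?Ae" for \<eta>
  proof -
    have FAe: "F * \<eta> \<in> ?Ae" using that Ae_mul by blast
    have "\<phi> k (F * \<eta>) = \<phi> k \<eta>" if "k < n" for k
    proof -
      have "\<phi> k (F * \<eta>) = \<phi> k (fk k * (F * \<eta>))" using fk[OF that] FAe by simp
      also have "\<dots> = \<phi> k (fk k * \<eta>)" using fkF[OF that] by (simp add: mult.assoc[symmetric])
      also have "\<dots> = \<phi> k \<eta>" using fk[OF that] \<open>\<eta> \<in> ?Ae\<close> by simp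
      finally show ?thesis .
    qed
    then show ?thesis using rep FAe \<open>\<eta> \<in> ?Ae\<close> by simp
  qed
  have JT: "x \<in> Jset e \<Longrightarrow> \<exists>a. \<forall>\<eta>\<in>?Ae. T (x * \<eta>) = a * \<eta>" for x
  proof (induction rule: Jset.induct)
    case J0 show ?case by (intro exI[of _ 0] ballI) (simp add: T0)
  next
    case (J1 u v)
    show ?case
    proof (intro exI ballI)
      fix \<eta> assume "\<eta> \<in> ?Ae"
      then obtain y where y: "\<eta> = y * e" by auto
      have "(u*e) * (e*(v*y)*e) = u*(e*e)*v*y*e" by (simp add: mult.assoc)
      also have "\<dots> = u*e*v*y*e" using ee by simp
      also have "\<dots> = u*e*v*\<eta>" using y by (simp add: mult.assoc)
      finally have eq1: "u*e*v*\<eta> = (u*e) * (e*(v*y)*e)" by simp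
      have m1: "u * e \<in> ?Ae" by blast
      have m2: "e*(v*y)*e \<in> {e * x * e | x. True}" by blast
      have "T (u*e*v*\<eta>) = T (u*e) * (e*(v*y)*e)" unfolding eq1 by (rule rc[OF m1 m2])
      also have "\<dots> = (T (u*e) * e * v) * \<eta>" using y by (simp add: mult.assoc)
      finally show "T (u*e*v*\<eta>) = (T (u*e) * e * v) * \<eta>" .
    qed
  next
    case (J2 x y)
    then obtain a b where a: "\<forall>\<eta>\<in>?Ae. T (x * \<eta>) = a * \<eta>" and b: "\<forall>\<eta>\<in>?Ae. T (y * \<eta>) = b * \<eta>" by blast
    show ?case
    proof (intro exI ballI)
      fix \<eta> assume h: "\<eta> \<in> ?Ae"
      have "T ((x+y)*\<eta>) = T (x*\<eta>) + T (y*\<eta>)" using Tadd Ae_mul h by (simp add: distrib_right)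
      then show "T ((x+y)*\<eta>) = (a+b)*\<eta>" using a b h by (simp add: distrib_right)
    qed
  qed
  obtain a where a: "\<forall>\<eta>\<in>?Ae. T (F * \<eta>) = a * \<eta>" using JT sumS_J[OF gen S] F_def by blast
  have "T = Lmul sc e a"
  proof
    fix \<eta> show "T \<eta> = Lmul sc e a \<eta>"
      using a TF off unfolding Lmul_def Ae_car by auto
  qed
  then show ?thesis by blast
qed


lemma Vfin: assumes jE: "j \<in> E"
  shows "\<exists>B. finite B \<and> independent B \<and> B \<subseteq> {j*y*e|y. True} \<and> {j*y*e|y. True} \<subseteq> span B"
proof -
  obtain R where R: "finite R" "R \<subseteq> E" "\<forall>T. finite T \<longrightarrow> R \<subseteq> T \<longrightarrow> T \<subseteq> E \<longrightarrow> e * sum id T = e"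
    using right_unit[of e] by blast
  have Re: "e * sum id R = e" using R(3) R(1) R(2) by blast
  have "\<forall>r. \<exists>B. r\<in>R \<longrightarrow> finite B \<and> {j*a*r|a. True} \<subseteq> span B"
  proof
    fix r show "\<exists>B. r\<in>R \<longrightarrow> finite B \<and> {j*a*r|a. True} \<subseteq> span B"
    proof (cases "r \<in> R")
      case True
      then have "r \<in> E" using R(2) by blast
      then obtain B where "finite B \<and> {j*a*r|a. True} \<subseteq> span B" using fin[OF jE] by blast
      then show ?thesis by blast
    qed simp
  qed
  from choice[OF this] obtain Br where Br0: "\<forall>r. r\<in>R \<longrightarrow> finite (Br r) \<and> {j*a*r|a. True} \<subseteq> span (Br r)" by blast
  define B0 where "B0 = (\<Union>r\<in>R. Br r)"
  have fB0: "finite B0" unfolding B0_def using R(1) Br0 by blast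
  have VB0: "{j*y*e|y. True} \<subseteq> span B0"
  proof
    fix v assume "v \<in> {j*y*e|y. True}"
    then obtain y where v: "v = j*y*e" by blast
    have "v = j*y*(e*sum id R)" using v Re by simp
    also have "\<dots> = (\<Sum>r\<in>R. j*(y*e)*r)" by (simp add: sum_distrib_left mult.assoc)
    finally have v2: "v = (\<Sum>r\<in>R. j*(y*e)*r)" .
    have mem: "j*(y*e)*r \<in> span B0" if "r \<in> R" for r
    proof -
      have "j*(y*e)*r \<in> {j*a*r|a. True}" by blast
      then have "j*(y*e)*r \<in> span (Br r)" using Br0 that by blast
      moreover have "span (Br r) \<subseteq> span B0" using that unfolding B0_def by (intro span_mono) blast
      ultimately show ?thesis by blast
    qed
    show "v \<in> span B0" unfolding v2 by (rule span_sum) (rule mem)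
  qed
  obtain B where B: "B \<subseteq> {j*y*e|y. True}" "independent B" "{j*y*e|y. True} \<subseteq> span B"
    by (rule basis_exists)
  have "B \<subseteq> span B0" using B(1) VB0 by (rule subset_trans)
  then have "finite B" using independent_span_bound[OF fB0 B(2)] by blast
  then show ?thesis using B by blast
qed

lemma Lmul_End0: assumes ee: "e*e = e" shows "Lmul sc e a \<in> End0_right (Ae_mod sc e) (*) {e*x*e|x. True}"
proof -
  let ?Ae = "{a*e|a. True}"
  obtain Fs g where Fs: "finite Fs" "Fs \<subseteq> E\<times>E" "\<forall>p\<in>Fs. g p \<in> {fst p * x * snd p|x. True}" "a = (\<Sum>p\<in>Fs. g p)"
    using dec[of a] by blast
  have "\<forall>j. \<exists>B. j\<in>E \<longrightarrow> finite B \<and> independent B \<and> B \<subseteq> {j*y*e|y. True} \<and> {j*y*e|y. True} \<subseteq> span B"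
  proof
    fix j show "\<exists>B. j\<in>E \<longrightarrow> finite B \<and> independent B \<and> B \<subseteq> {j*y*e|y. True} \<and> {j*y*e|y. True} \<subseteq> span B"
    proof (cases "j \<in> E")
      case True then show ?thesis using Vfin[OF True] by blast
    qed simp
  qed
  from choice[OF this] obtain Bf where Bf0: "\<forall>j. j\<in>E \<longrightarrow> finite (Bf j) \<and> independent (Bf j) \<and> Bf j \<subseteq> {j*y*e|y. True} \<and> {j*y*e|y. True} \<subseteq> span (Bf j)"
    by blast
  have Bf: "\<And>j. j\<in>E \<Longrightarrow> finite (Bf j) \<and> independent (Bf j) \<and> Bf j \<subseteq> {j*y*e|y. True} \<and> {j*y*e|y. True} \<subseteq> span (Bf j)"
    using Bf0 by blast
  define I where "I = Sigma Fs (\<lambda>p. Bf (snd p))"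
  have finB: "\<forall>p\<in>Fs. finite (Bf (snd p))"
  proof
    fix p assume "p \<in> Fs" then have "snd p \<in> E" using Fs(2) by auto
    then show "finite (Bf (snd p))" using Bf by blast
  qed
  have fI: "finite I" unfolding I_def by (rule finite_SigmaI[OF Fs(1)]) (use finB in blast)
  define \<phi> where "\<phi> i \<eta> = representation (Bf (snd (fst i))) (snd (fst i) * \<eta>) (snd i)" for i :: "('a \<times> 'a) \<times> 'a" and \<eta>
  define \<xi> where "\<xi> i = g (fst i) * snd i" for i
  have jV: "j * \<eta> \<in> span (Bf j)" if jE': "j \<in> E" and eta: "\<eta> \<in> ?Ae" for j \<eta>
  proof -
    obtain y where "\<eta> = y * e" using eta by blast
    then have "j * \<eta> = j*y*e" by (simp add: mult.assoc)
    then have "j * \<eta> \<in> {j*y*e|y. True}" by blast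
    then show ?thesis using Bf[OF jE'] by blast
  qed
  have gp: "g p * \<eta> = (\<Sum>b\<in>Bf (snd p). sc (\<phi> (p,b) \<eta>) (\<xi> (p,b)))" if "p \<in> Fs" "\<eta> \<in> ?Ae" for p \<eta>
  proof -
    define j where "j = snd p"
    have jE: "j \<in> E" using that Fs(2) j_def by auto
    have "g p \<in> {fst p * x * snd p|x. True}" using Fs(3) \<open>p \<in> Fs\<close> by blast
    then obtain x where gx: "g p = fst p * x * j" unfolding j_def by blast
    have "g p * j = g p" using gx idem[OF jE] by (simp add: mult.assoc)
    moreover have "g p * (j * \<eta>) = (g p * j) * \<eta>" by (simp add: mult.assoc)
    ultimately have "g p * \<eta> = g p * (j * \<eta>)" by simp
    also have "j * \<eta> = (\<Sum>b\<in>Bf j. sc (representation (Bf j) (j * \<eta>) b) b)"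
      using sum_representation_eq[of "Bf j" "j*\<eta>" "Bf j"] Bf[OF jE] jV[OF jE \<open>\<eta> \<in> ?Ae\<close>] by simp
    finally have "g p * \<eta> = (\<Sum>b\<in>Bf j. g p * sc (representation (Bf j) (j * \<eta>) b) b)"
      by (simp add: sum_distrib_left)
    also have "\<dots> = (\<Sum>b\<in>Bf j. sc (representation (Bf j) (j * \<eta>) b) (g p * b))"
      by (simp add: scr)
    finally show ?thesis unfolding \<phi>_def \<xi>_def j_def by simp
  qed
  have arep: "a * \<eta> = (\<Sum>i\<in>I. sc (\<phi> i \<eta>) (\<xi> i))" if "\<eta> \<in> ?Ae" for \<eta>
  proof -
    have "a * \<eta> = (\<Sum>p\<in>Fs. g p * \<eta>)" using Fs(4) by (simp add: sum_distrib_right)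
    also have "\<dots> = (\<Sum>p\<in>Fs. \<Sum>b\<in>Bf (snd p). sc (\<phi> (p,b) \<eta>) (\<xi> (p,b)))" using gp that by simp
    also have "\<dots> = (\<Sum>(p,b)\<in>I. sc (\<phi> (p,b) \<eta>) (\<xi> (p,b)))" unfolding I_def
      by (rule sum.Sigma[OF Fs(1) finB])
    also have "\<dots> = (\<Sum>i\<in>I. sc (\<phi> i \<eta>) (\<xi> i))" by (simp add: case_prod_beta)
    finally show ?thesis .
  qed
  have phd: "\<phi> i \<in> mdual (Ae_mod sc e)" if "i \<in> I" for i
  proof -
    define j where "j = snd (fst i)"
    have jE: "j \<in> E" using that Fs(2) j_def I_def by auto
    have ind: "independent (Bf j)" using Bf[OF jE] by blast
    have ph: "\<phi> i \<eta> = representation (Bf j) (j * \<eta>) (snd i)" for \<eta> unfolding \<phi>_def j_def by simp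
    show ?thesis unfolding mdual_def Ae_car Ae_ops
    proof (intro CollectI conjI ballI allI exI[of _ j])
      fix x y assume "x \<in> ?Ae" "y \<in> ?Ae"
      then show "\<phi> i (x + y) = \<phi> i x + \<phi> i y"
        using representation_add[OF ind jV[OF jE, of y] jV[OF jE, of x]] ph by (simp add: distrib_left)
    next
      fix c x assume "x \<in> ?Ae"
      then show "\<phi> i (sc c x) = c * \<phi> i x"
        using representation_scale[OF ind jV[OF jE, of x], of c] ph by (simp add: scr[symmetric])
    next
      show "j * j = j" using idem[OF jE] .
    next
      fix \<eta> assume "\<eta> \<in> ?Ae"
      show "\<phi> i (j * \<eta>) = \<phi> i \<eta>" using ph idem[OF jE] by (simp add: mult.assoc[symmetric])
    qed
  qed
  have xid: "\<xi> i \<in> ?Ae" if "i \<in> I" for i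
  proof -
    define j where "j = snd (fst i)"
    have jE: "j \<in> E" using that Fs(2) j_def I_def by auto
    have "snd i \<in> Bf j" using that I_def j_def by auto
    then obtain y where "snd i = j*y*e" using Bf[OF jE] by blast
    then have "\<xi> i = (g (fst i) * j * y) * e" unfolding \<xi>_def by (simp add: mult.assoc)
    then show ?thesis by auto
  qed
  obtain h where h: "bij_betw h {0..<card I} I" using ex_bij_betw_nat_finite[OF fI] by blast
  have hI: "k < card I \<Longrightarrow> h k \<in> I" for k using h by (auto simp: bij_betw_def)
  have rep2: "a * \<eta> = (\<Sum>k<card I. sc (1 * \<phi> (h k) \<eta>) (\<xi> (h k)))" if "\<eta> \<in> ?Ae" for \<eta>
    using arep[OF that] sum.reindex_bij_betw[OF h, of "\<lambda>i. sc (\<phi> i \<eta>) (\<xi> i)"] by (simp add: atLeast0LessThan)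
  have E0: "Lmul sc e a \<in> End0 (Ae_mod sc e)" unfolding End0_def
  proof (rule CollectI, rule conjI)
    show "\<forall>\<eta>. \<eta> \<notin> mcar (Ae_mod sc e) \<longrightarrow> Lmul sc e a \<eta> = mzero (Ae_mod sc e)" by (simp add: Lmul_def Ae_ops)
    have c1: "\<forall>k<card I. \<phi> (h k) \<in> mdual (Ae_mod sc e) \<and> \<xi> (h k) \<in> mcar (Ae_mod sc e)"
      using phd xid hI unfolding Ae_car by blast
    have c2: "\<forall>\<eta>\<in>mcar (Ae_mod sc e). Lmul sc e a \<eta> = msum (Ae_mod sc e) (\<lambda>k. msc (Ae_mod sc e) (1 * \<phi> (h k) \<eta>) (\<xi> (h k))) (card I)"
    proof
      fix \<eta> assume h1: "\<eta> \<in> mcar (Ae_mod sc e)"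
      then have h2: "\<eta> \<in> ?Ae" by (simp only: Ae_car)
      have "Lmul sc e a \<eta> = a * \<eta>" using h1 by (simp add: Lmul_def)
      also have "\<dots> = (\<Sum>k<card I. sc (1 * \<phi> (h k) \<eta>) (\<xi> (h k)))" by (rule rep2[OF h2])
      also have "\<dots> = msum (Ae_mod sc e) (\<lambda>k. msc (Ae_mod sc e) (1 * \<phi> (h k) \<eta>) (\<xi> (h k))) (card I)"
        by (simp only: msum_Ae Ae_ops)
      finally show "Lmul sc e a \<eta> = msum (Ae_mod sc e) (\<lambda>k. msc (Ae_mod sc e) (1 * \<phi> (h k) \<eta>) (\<xi> (h k))) (card I)" .
    qed
    show "\<exists>n c \<phi> \<xi>. (\<forall>k<n. \<phi> k \<in> mdual (Ae_mod sc e) \<and> \<xi> k \<in> mcar (Ae_mod sc e)) \<and>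
        (\<forall>\<eta>\<in>mcar (Ae_mod sc e). Lmul sc e a \<eta> = msum (Ae_mod sc e) (\<lambda>k. msc (Ae_mod sc e) (c k * \<phi> k \<eta>) (\<xi> k)) n)"
      apply (rule exI[of _ "card I"], rule exI[of _ "\<lambda>_. 1"], rule exI[of _ "\<lambda>k. \<phi> (h k)"], rule exI[of _ "\<lambda>k. \<xi> (h k)"])
      using c1 c2 by (rule conjI)
  qed
  have RC: "\<forall>\<xi>'\<in>mcar (Ae_mod sc e). \<forall>c'\<in>{e*x*e|x. True}. Lmul sc e a (\<xi>' * c') = Lmul sc e a \<xi>' * c'"
  proof (intro ballI)
    fix \<xi>' c' assume h: "\<xi>' \<in> mcar (Ae_mod sc e)" "c' \<in> {e*x*e|x. True}"
    then obtain y x where yx: "\<xi>' = y*e" "c' = e*x*e" unfolding Ae_car by blast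
    then have "\<xi>' * c' = (y*e*e*x)*e" by (simp add: mult.assoc)
    then have "\<xi>' * c' \<in> mcar (Ae_mod sc e)" unfolding Ae_car by blast
    then show "Lmul sc e a (\<xi>' * c') = Lmul sc e a \<xi>' * c'" using h(1) by (simp add: Lmul_def mult.assoc)
  qed
  show ?thesis unfolding End0_right_def using E0 RC by blast
qed

end

theorem lemma11p6:
  fixes sc :: "complex \<Rightarrow> 'a::ring \<Rightarrow> 'a" and e :: 'a
  assumes "calg sc" and "AUF sc" and "generating sc e"
  shows "bij_betw (Lmul sc e) UNIV (End0_right (Ae_mod sc e) (*) {e * x * e | x. True})
    \<and> (\<forall>a b. Lmul sc e (a + b) = (\<lambda>\<eta>. Lmul sc e a \<eta> + Lmul sc e b \<eta>))
    \<and> (\<forall>c a. Lmul sc e (sc c a) = (\<lambda>\<eta>. sc c (Lmul sc e a \<eta>)))"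
proof -
  have cal: "vector_space sc \<and> (\<forall>c x y. sc c (x * y) = sc c x * y \<and> sc c (x * y) = x * sc c y)"
    using assms(1) unfolding calg_def .
  have vs: "vector_space sc" using cal by blast
  have scl: "\<And>c x y. sc c (x*y) = sc c x * y" using cal by blast
  have scr: "\<And>c x y. sc c (x*y) = x * sc c y" using cal by blast
  from assms(2)[unfolded AUF_def] obtain E :: "'a set" where EE: "(\<forall>i\<in>E. i * i = i) \<and>
     (\<forall>i\<in>E. \<forall>j\<in>E. i \<noteq> j \<longrightarrow> i * j = 0) \<and>
     (\<forall>i\<in>E. \<forall>j\<in>E. \<exists>B. finite B \<and> {i * a * j | a. True} \<subseteq> module.span sc B) \<and>
     (\<forall>x. \<exists>F g. finite F \<and> F \<subseteq> E \<times> E \<and>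
        (\<forall>p\<in>F. g p \<in> {fst p * a * snd p | a. True}) \<and> x = (\<Sum>p\<in>F. g p))"
    by (rule exE)
  have E1: "\<forall>i\<in>E. i * i = i" using EE by (rule conjunct1)
  have E2: "\<forall>i\<in>E. \<forall>j\<in>E. i \<noteq> j \<longrightarrow> i * j = 0" using EE[THEN conjunct2] by (rule conjunct1)
  have E3: "\<forall>i\<in>E. \<forall>j\<in>E. \<exists>B. finite B \<and> {i * a * j | a. True} \<subseteq> module.span sc B"
    using EE[THEN conjunct2, THEN conjunct2] by (rule conjunct1)
  have E4: "\<forall>x. \<exists>F g. finite F \<and> F \<subseteq> E \<times> E \<and>
        (\<forall>p\<in>F. g p \<in> {fst p * a * snd p | a. True}) \<and> x = (\<Sum>p\<in>F. g p)"
    using EE[THEN conjunct2, THEN conjunct2] by (rule conjunct2)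
  interpret C: ctx sc E
  proof (rule ctx.intro[OF vs], rule ctx_axioms.intro)
    show "\<And>c x y. sc c (x*y) = sc c x * y" by (rule scl)
    show "\<And>c x y. sc c (x*y) = x * sc c y" by (rule scr)
    show "\<And>i. i\<in>E \<Longrightarrow> i*i = i" by (rule E1[rule_format])
    show "\<And>i j. i\<in>E \<Longrightarrow> j\<in>E \<Longrightarrow> i\<noteq>j \<Longrightarrow> i*j = 0" by (rule E2[rule_format])
    show "\<And>i j. i\<in>E \<Longrightarrow> j\<in>E \<Longrightarrow> \<exists>B. finite B \<and> {i*a*j|a. True} \<subseteq> module.span sc B" by (rule E3[rule_format])
    show "\<And>x. \<exists>F g. finite F \<and> F \<subseteq> E\<times>E \<and> (\<forall>p\<in>F. g p \<in> {fst p * a * snd p|a. True}) \<and> x = (\<Sum>p\<in>F. g p)"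
      by (rule E4[rule_format])
  qed
  have ee: "e * e = e" using assms(3) by (simp add: generating_def)
  have bij: "bij_betw (Lmul sc e) UNIV (End0_right (Ae_mod sc e) (*) {e * x * e | x. True})"
    unfolding bij_betw_def
  proof
    show "inj (Lmul sc e)" using C.Lmul_inj[OF assms(3)] by (auto intro: injI)
    show "range (Lmul sc e) = End0_right (Ae_mod sc e) (*) {e * x * e | x. True}"
    proof
      show "range (Lmul sc e) \<subseteq> End0_right (Ae_mod sc e) (*) {e * x * e | x. True}"
        using C.Lmul_End0[OF ee] by (intro image_subsetI)
      show "End0_right (Ae_mod sc e) (*) {e * x * e | x. True} \<subseteq> range (Lmul sc e)"
      proof
        fix T assume "T \<in> End0_right (Ae_mod sc e) (*) {e * x * e | x. True}"
        then obtain a where "T = Lmul sc e a" using C.Lmul_surj[OF assms(3)] by blast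
        then show "T \<in> range (Lmul sc e)" by (rule image_eqI) simp
      qed
    qed
  qed
  have add: "\<forall>a b. Lmul sc e (a + b) = (\<lambda>\<eta>. Lmul sc e a \<eta> + Lmul sc e b \<eta>)"
    by (simp add: Lmul_def distrib_right fun_eq_iff)
  have scal: "\<forall>c a. Lmul sc e (sc c a) = (\<lambda>\<eta>. sc c (Lmul sc e a \<eta>))"
    by (simp add: Lmul_def fun_eq_iff scl)
  show ?thesis using bij add scal by blast
qed

end
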